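(* For $\epsilon>0$ sufficiently small, the map $\{(\phi,\theta)\in S^2: y\neq 0\}\to S^2\times S^2\setminus\Delta$, $(\phi,\theta)\mapsto p_2(L_s(\phi,\theta))=(\hat a,-\hat b)$, is an immersion, where for $\theta\in(0,\pi)$ $$\hat a=(-\sin(\phi+\nu),-\cos(\phi+\nu),0),$$ $$\hat b=D^{-1}\Big(\cos^2\nu\cos^2\theta\sin(\phi+\nu)+\sin^2\theta\sin(\phi-\nu),\ \cos^2\nu\cos^2\theta\cos(\phi+\nu)+\sin^2\theta\cos(\phi-\nu),\ -\tfrac12\sin 2\nu\sin2\theta\Big),$$ and for $\theta\in(\pi,2\pi)$, $\hat a$ and the first two components of $\hat b$ are replaced by their negatives (the third component of $\hat b$ unchanged); here $\nu=\epsilon\sin\phi$ and $D=\cos^2\nu+\sin^2\nu\sin^2\theta$.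
   Context: $(\phi,\theta)$ are spherical-polar coordinates on $S^2$ with Cartesian coordinates $(x,y,z)=(\sin\phi\cos\theta,\sin\phi\sin\theta,\cos\phi)$, so $\{y\neq0\}=\{\phi\in(0,\pi),\theta\notin\{0,\pi\}\}$. $\Delta=\{(\hat r,\hat r)\}\subset S^2\times S^2$ is the diagonal. ($\hat a,\hat b$ are the unit vectors of the puncture holonomies $a=i\hat a\cdot\vec\sigma$, $b=i\hat b\cdot\vec\sigma$ of the normalized representative of the point $L_s(\phi,\theta)$ of the sphere Lagrangian in the traceless character variety of the twice-punctured torus, and $p_2$ is the homeomorphism $P_4\to S^2\times S^2\setminus\Delta$.) *)

theory Defs
  imports "HOL-Analysis.Analysis"
begin

type_synonym vec3 = "real \<times> real \<times> real"

definition nu :: "real \<Rightarrow> real \<Rightarrow> real" where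
  "nu eps phi = eps * sin phi"

definition Dden :: "real \<Rightarrow> real \<Rightarrow> real \<Rightarrow> real" where
  "Dden eps phi theta = (cos (nu eps phi))^2 + (sin (nu eps phi))^2 * (sin theta)^2"

definition sgnth :: "real \<Rightarrow> real" where
  "sgnth theta = (if theta < pi then 1 else -1)"

definition ahat :: "real \<Rightarrow> real \<Rightarrow> real \<Rightarrow> vec3" where
  "ahat eps phi theta =
     (let v = nu eps phi; s = sgnth theta in
      (s * (- sin (phi + v)), s * (- cos (phi + v)), 0))"

definition bhat :: "real \<Rightarrow> real \<Rightarrow> real \<Rightarrow> vec3" where
  "bhat eps phi theta =
     (let v = nu eps phi; s = sgnth theta; d = Dden eps phi theta in
      (s * ((cos v)^2 * (cos theta)^2 * sin (phi + v) + (sin theta)^2 * sin (phi - v)) / d,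
       s * ((cos v)^2 * (cos theta)^2 * cos (phi + v) + (sin theta)^2 * cos (phi - v)) / d,
       (- (1/2) * sin (2 * v) * sin (2 * theta)) / d))"

definition p2Ls :: "real \<Rightarrow> real \<times> real \<Rightarrow> vec3 \<times> vec3" where
  "p2Ls eps x = (ahat eps (fst x) (snd x), - bhat eps (fst x) (snd x))"

text \<open>Domain \<open>{y \<noteq> 0}\<close> in spherical coordinates.\<close>
definition ydom :: "(real \<times> real) set" where
  "ydom = {(phi, theta). 0 < phi \<and> phi < pi \<and> 0 < theta \<and> theta < 2 * pi \<and> theta \<noteq> pi}"

definition immersion_on :: "('a::real_normed_vector \<Rightarrow> 'b::real_normed_vector) \<Rightarrow> 'a set \<Rightarrow> bool" where
  "immersion_on f S \<longleftrightarrow> (\<forall>x\<in>S. \<exists>f'. (f has_derivative f') (at x) \<and> inj f')"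

end

theory Submission imports Defs begin
lemma fst_hd[derivative_intros]: "(fst has_derivative fst) F"
  by (rule bounded_linear.has_derivative[OF bounded_linear_fst has_derivative_ident, simplified])
lemma snd_hd[derivative_intros]: "(snd has_derivative snd) F"
  by (rule bounded_linear.has_derivative[OF bounded_linear_snd has_derivative_ident, simplified])

lemma lin2:
  assumes "linear (d::real\<times>real\<Rightarrow>real)"
  shows "d h = fst h * d (1,0) + snd h * d (0,1)"
proof -
  have "h = fst h *\<^sub>R (1,0) + snd h *\<^sub>R (0,1)" by (cases h) simp
  then have "d h = d (fst h *\<^sub>R (1,0) + snd h *\<^sub>R (0,1))" by simp
  also have "\<dots> = fst h * d (1,0) + snd h * d (0,1)"
  proof -
    have l: "\<And>x y. d (x + y) = d x + d y" "\<And>c x. d (c *\<^sub>R x) = c *\<^sub>R d x"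
      using assms[unfolded linear_iff] by blast+
    show ?thesis by (simp only: l) simp
  qed
  finally show ?thesis .
qed

lemma partial1:
  fixes F :: "real\<times>real \<Rightarrow> real"
  assumes "(F has_derivative d) (at (a,b))" "((\<lambda>t. F (t,b)) has_real_derivative P) (at a)"
  shows "d (1,0) = P"
proof -
  have i: "((\<lambda>t::real. (t,b)) has_derivative (\<lambda>t. (t,0))) (at a)"
    by (auto intro!: derivative_eq_intros)
  have "((\<lambda>t. F (t,b)) has_derivative (\<lambda>t. d (t,0))) (at a)"
    using has_derivative_compose[OF i, of F d] assms(1) by simp
  moreover have "(\<lambda>t. d (t,0)) = (\<lambda>t. d (1,0) * t)"
  proof (rule ext)
    fix t show "d (t,0) = d (1,0) * t"
      using lin2[OF has_derivative_linear[OF assms(1)], of "(t,0)"] by simp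
  qed
  ultimately have "((\<lambda>t. F (t,b)) has_real_derivative d (1,0)) (at a)"
    by (simp add: has_field_derivative_def)
  then show ?thesis using assms(2) DERIV_unique by blast
qed

lemma partial2:
  fixes F :: "real\<times>real \<Rightarrow> real"
  assumes "(F has_derivative d) (at (a,b))" "((\<lambda>t. F (a,t)) has_real_derivative P) (at b)"
  shows "d (0,1) = P"
proof -
  have i: "((\<lambda>t::real. (a,t)) has_derivative (\<lambda>t. (0,t))) (at b)"
    by (auto intro!: derivative_eq_intros)
  have "((\<lambda>t. F (a,t)) has_derivative (\<lambda>t. d (0,t))) (at b)"
    using has_derivative_compose[OF i, of F d] assms(1) by simp
  moreover have "(\<lambda>t. d (0,t)) = (\<lambda>t. d (0,1) * t)"
  proof (rule ext)
    fix t show "d (0,t) = d (0,1) * t"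
      using lin2[OF has_derivative_linear[OF assms(1)], of "(0,t)"] by simp
  qed
  ultimately have "((\<lambda>t. F (a,t)) has_real_derivative d (0,1)) (at b)"
    by (simp add: has_field_derivative_def)
  then show ?thesis using assms(2) DERIV_unique by blast
qed

lemma cos_nu_pos:
  assumes "0 < eps" "eps < (1::real)"
  shows "0 < cos (eps * sin t)"
proof -
  have "\<bar>eps * sin t\<bar> \<le> eps" using assms abs_sin_le_one[of t]
    by (simp add: abs_mult mult_left_le)
  then show ?thesis using assms pi_gt3 by (intro cos_gt_zero_pi) auto
qed

lemma Dd_deriv: "((\<lambda>t. c + q * (sin t)^2) has_real_derivative q * (2 * sin t * cos t)) (at t)"
  by (auto intro!: derivative_eq_intros simp: algebra_simps)

lemma quot_deriv:
  assumes D: "c + q * (sin t)^2 \<noteq> 0"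
  shows "((\<lambda>t. - (s * ((c * (cos t)^2 * A + (sin t)^2 * B) / (c + q * (sin t)^2)))) has_real_derivative
     - (s * (((c * (2 * cos t * (- sin t)) * A + 2 * sin t * cos t * B) * (c + q * (sin t)^2)
          - (c * (cos t)^2 * A + (sin t)^2 * B) * (q * (2 * sin t * cos t))) / ((c + q * (sin t)^2) * (c + q * (sin t)^2))))) (at t)"
proof -
  have N: "((\<lambda>t. c * (cos t)^2 * A + (sin t)^2 * B) has_real_derivative (c * (2 * cos t * (- sin t)) * A + 2 * sin t * cos t * B)) (at t)"
    by (auto intro!: derivative_eq_intros simp: algebra_simps)
  show ?thesis
    by (intro DERIV_minus DERIV_cmult DERIV_divide N Dd_deriv D)
qed

lemma quot_deriv5:
  assumes D: "c + q * (sin t)^2 \<noteq> 0"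
  shows "((\<lambda>t. - ((- (1/2) * K * sin (2 * t)) / (c + q * (sin t)^2))) has_real_derivative
     - (((- (1/2) * K * (cos (2 * t) * 2)) * (c + q * (sin t)^2)
          - (- (1/2) * K * sin (2 * t)) * (q * (2 * sin t * cos t))) / ((c + q * (sin t)^2) * (c + q * (sin t)^2)))) (at t)"
proof -
  have N: "((\<lambda>t. - (1/2) * K * sin (2 * t)) has_real_derivative (- (1/2) * K * (cos (2 * t) * 2))) (at t)"
    by (auto intro!: derivative_eq_intros simp: algebra_simps)
  show ?thesis
    by (intro DERIV_minus DERIV_divide N Dd_deriv D)
qed

lemma num_id:
  fixes c q st ct A B :: real
  assumes "c + q = (1::real)" "st^2 + ct^2 = 1"
  shows "(c * (2 * ct * (- st)) * A + 2 * st * ct * B) * (c + q * st^2)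
          - (c * ct^2 * A + st^2 * B) * (q * (2 * st * ct)) = 2 * st * ct * c * (B - A)"
proof -
  have "(c * (2 * ct * (- st)) * A + 2 * st * ct * B) * (c + q * st^2)
          - (c * ct^2 * A + st^2 * B) * (q * (2 * st * ct)) = 2 * st * ct * (B*c - c^2*A - c*q*A*(st^2+ct^2))"
    by (simp add: algebra_simps power2_eq_square)
  also have "\<dots> = 2 * st * ct * (B*c - c*A*(c + q))" unfolding assms(2) by (simp add: algebra_simps power2_eq_square)
  also have "\<dots> = 2 * st * ct * c * (B - A)" using assms(1) by (simp add: algebra_simps)
  finally show ?thesis .
qed

theorem mainTheorem11:
  shows "\<exists>eps0 > 0. \<forall>eps. 0 < eps \<and> eps < eps0 \<longrightarrow> immersion_on (p2Ls eps) ydom"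
proof (intro exI[of _ 1] conjI allI impI)
  show "(0::real) < 1" by simp
  fix eps :: real
  assume epsr: "0 < eps \<and> eps < 1"
  then have e0: "0 < eps" and e1: "eps < 1" by auto
  show "immersion_on (p2Ls eps) ydom"
    unfolding immersion_on_def
  proof
    fix x assume "x \<in> ydom"
    then obtain phi theta where x: "x = (phi, theta)" and ph0: "0 < phi" and ph1: "phi < pi"
      and th0: "0 < theta" and th1: "theta < 2 * pi" and thpi: "theta \<noteq> pi"
      unfolding ydom_def by auto
    define s where "s = sgnth theta"
    have s0: "s \<noteq> 0" by (simp add: s_def sgnth_def)
    define U where "U = (if theta < pi then {y::real\<times>real. snd y < pi} else {y. pi < snd y})"
    have oU: "open U" unfolding U_def
      by (auto intro!: open_Collect_less continuous_intros)
    have xU: "x \<in> U" using thpi by (auto simp: U_def x)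
    have sU: "sgnth (snd y) = s" if "y \<in> U" for y
      using that thpi by (auto simp: U_def s_def sgnth_def split: if_splits)
    have Dpos: "0 < (cos (eps * sin a))^2 + (sin (eps * sin a))^2 * (sin b)^2" for a b
      using cos_nu_pos[OF e0 e1, of a] by (simp add: add_pos_nonneg)
    define f1 where "f1 = (\<lambda>y::real\<times>real. s * (- sin (fst y + eps * sin (fst y))))"
    define f2 where "f2 = (\<lambda>y::real\<times>real. s * (- cos (fst y + eps * sin (fst y))))"
    define f3 where "f3 = (\<lambda>y::real\<times>real. - (s * ((cos (eps * sin (fst y)))^2 * (cos (snd y))^2 * sin (fst y + eps * sin (fst y))
        + (sin (snd y))^2 * sin (fst y - eps * sin (fst y))) / ((cos (eps * sin (fst y)))^2 + (sin (eps * sin (fst y)))^2 * (sin (snd y))^2)))"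
    define f4 where "f4 = (\<lambda>y::real\<times>real. - (s * ((cos (eps * sin (fst y)))^2 * (cos (snd y))^2 * cos (fst y + eps * sin (fst y))
        + (sin (snd y))^2 * cos (fst y - eps * sin (fst y))) / ((cos (eps * sin (fst y)))^2 + (sin (eps * sin (fst y)))^2 * (sin (snd y))^2)))"
    define f5 where "f5 = (\<lambda>y::real\<times>real. - ((- (1/2) * sin (2 * (eps * sin (fst y))) * sin (2 * snd y))
        / ((cos (eps * sin (fst y)))^2 + (sin (eps * sin (fst y)))^2 * (sin (snd y))^2)))"
    have eq: "((f1 y, f2 y, 0), (f3 y, f4 y, f5 y)) = p2Ls eps y" if "y \<in> U" for y
      using sU[OF that]
      by (simp add: p2Ls_def ahat_def bhat_def Let_def nu_def Dden_def f1_def f2_def f3_def f4_def f5_def)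
    have "\<exists>d. (f1 has_derivative d) (at x)" unfolding f1_def
      by (rule exI, (rule derivative_intros)+)
    then obtain d1 where d1: "(f1 has_derivative d1) (at x)" by blast
    have "\<exists>d. (f2 has_derivative d) (at x)" unfolding f2_def
      by (rule exI, (rule derivative_intros)+)
    then obtain d2 where d2: "(f2 has_derivative d2) (at x)" by blast
    have "\<exists>d. (f3 has_derivative d) (at x)" unfolding f3_def
      apply (rule exI, (rule derivative_intros)+)
      using Dpos[of "fst x" "snd x"] by auto
    then obtain d3 where d3: "(f3 has_derivative d3) (at x)" by blast
    have "\<exists>d. (f4 has_derivative d) (at x)" unfolding f4_def
      apply (rule exI, (rule derivative_intros)+)
      using Dpos[of "fst x" "snd x"] by auto
    then obtain d4 where d4: "(f4 has_derivative d4) (at x)" by blast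
    have "\<exists>d. (f5 has_derivative d) (at x)" unfolding f5_def
      apply (rule exI, (rule derivative_intros)+)
      using Dpos[of "fst x" "snd x"] by auto
    then obtain d5 where d5: "(f5 has_derivative d5) (at x)" by blast
    define G' where "G' = (\<lambda>h. ((d1 h, d2 h, 0::real), (d3 h, d4 h, d5 h)))"
    have dG: "((\<lambda>y. ((f1 y, f2 y, 0::real), (f3 y, f4 y, f5 y))) has_derivative G') (at x)"
      unfolding G'_def by (intro has_derivative_Pair d1 d2 d3 d4 d5 has_derivative_const)
    have dP: "(p2Ls eps has_derivative G') (at x)"
      by (rule has_derivative_transform_within_open[OF dG oU xU eq])
    show "\<exists>f'. (p2Ls eps has_derivative f') (at x) \<and> inj f'"
    proof (intro exI conjI)
      show "(p2Ls eps has_derivative G') (at x)" by (rule dP)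
      show "inj G'"
      proof -
        have linG: "linear G'" by (rule has_derivative_linear[OF dP])
        define nv where "nv = eps * sin phi"
        define c where "c = (cos nv)^2"
        define q where "q = (sin nv)^2"
        define D where "D = c + q * (sin theta)^2"
        define K where "K = sin (2 * nv)"
        have sph: "0 < sin phi" using ph0 ph1 by (rule sin_gt_zero)
        have nv0: "0 < nv" using e0 sph by (simp add: nv_def)
        have "eps * sin phi \<le> eps" using mult_left_le[OF sin_le_one[of phi], of eps] e0 by simp
        then have nv1: "nv < 1" using e1 unfolding nv_def by simp
        have snv: "0 < sin nv" using nv0 nv1 pi_gt3 by (intro sin_gt_zero) auto
        have cpos: "0 < c" using cos_nu_pos[OF e0 e1, of phi] by (simp add: c_def nv_def)
        have Dpos': "0 < D" using Dpos[of phi theta] by (simp add: D_def c_def q_def nv_def)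
        have Kpos: "0 < K" unfolding K_def using nv0 nv1 pi_gt3 by (intro sin_gt_zero) auto
        have cq: "c + q = 1" by (simp add: c_def q_def)
        have sth: "sin theta \<noteq> 0"
        proof (cases "theta < pi")
          case True then show ?thesis using sin_gt_zero[OF th0] by auto
        next
          case False then show ?thesis using sin_lt_zero[of theta] th1 thpi by auto
        qed
        have p11: "d1 (1,0) = s * (- (cos (phi + eps * sin phi) * (1 + eps * cos phi)))"
          apply (rule partial1[OF d1[unfolded x]])
          unfolding f1_def fst_conv snd_conv
          by (auto intro!: derivative_eq_intros simp: algebra_simps)
        have p21: "d2 (1,0) = s * (sin (phi + eps * sin phi) * (1 + eps * cos phi))"
          apply (rule partial1[OF d2[unfolded x]])
          unfolding f2_def fst_conv snd_conv
          by (auto intro!: derivative_eq_intros simp: algebra_simps)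
        have p12: "d1 (0,1) = 0"
          apply (rule partial2[OF d1[unfolded x]])
          unfolding f1_def fst_conv snd_conv
          by (auto intro!: derivative_eq_intros)
        have p22: "d2 (0,1) = 0"
          apply (rule partial2[OF d2[unfolded x]])
          unfolding f2_def fst_conv snd_conv
          by (auto intro!: derivative_eq_intros)
        have p42: "d4 (0,1) = - (s * (((c * (2 * cos theta * (- sin theta)) * cos (phi + nv) + 2 * sin theta * cos theta * cos (phi - nv)) * (c + q * (sin theta)^2)
          - (c * (cos theta)^2 * cos (phi + nv) + (sin theta)^2 * cos (phi - nv)) * (q * (2 * sin theta * cos theta))) / ((c + q * (sin theta)^2) * (c + q * (sin theta)^2))))"
        proof -
          have e4: "(\<lambda>t. f4 (phi, t)) = (\<lambda>t. - (s * ((c * (cos t)^2 * cos (phi + nv) + (sin t)^2 * cos (phi - nv)) / (c + q * (sin t)^2))))"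
            by (simp add: f4_def c_def q_def nv_def)
          show ?thesis
            apply (rule partial2[OF d4[unfolded x]])
            apply (subst e4)
            apply (rule quot_deriv)
            using Dpos' by (simp add: D_def)
        qed
        have p52: "d5 (0,1) = - (((- (1/2) * K * (cos (2 * theta) * 2)) * (c + q * (sin theta)^2)
          - (- (1/2) * K * sin (2 * theta)) * (q * (2 * sin theta * cos theta))) / ((c + q * (sin theta)^2) * (c + q * (sin theta)^2)))"
        proof -
          have e5: "(\<lambda>t. f5 (phi, t)) = (\<lambda>t. - ((- (1/2) * K * sin (2 * t)) / (c + q * (sin t)^2)))"
            by (simp add: f5_def c_def q_def nv_def K_def)
          show ?thesis
            apply (rule partial2[OF d5[unfolded x]])
            apply (subst e5)
            apply (rule quot_deriv5)
            using Dpos' by (simp add: D_def)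
        qed
        have lin1: "d1 h = fst h * d1 (1,0) + snd h * d1 (0,1)" for h
          by (rule lin2[OF has_derivative_linear[OF d1]])
        have lin2': "d2 h = fst h * d2 (1,0) + snd h * d2 (0,1)" for h
          by (rule lin2[OF has_derivative_linear[OF d2]])
        have lin4: "d4 h = fst h * d4 (1,0) + snd h * d4 (0,1)" for h
          by (rule lin2[OF has_derivative_linear[OF d4]])
        have lin5: "d5 h = fst h * d5 (1,0) + snd h * d5 (0,1)" for h
          by (rule lin2[OF has_derivative_linear[OF d5]])
        have kpos: "0 < 1 + eps * cos phi"
        proof -
          have "\<bar>eps * cos phi\<bar> \<le> eps" using abs_cos_le_one[of phi] e0
            by (simp add: abs_mult mult_left_le)
          then show ?thesis using e1 by linarith
        qed
        show "inj G'"
          unfolding linear_inj_iff_eq_0[OF linG]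
        proof (intro allI impI)
          fix h assume "G' h = 0"
          then have h1: "d1 h = 0" and h2: "d2 h = 0" and h4: "d4 h = 0" and h5: "d5 h = 0"
            by (auto simp: G'_def zero_prod_def)
          have f0: "fst h = 0"
          proof (rule ccontr)
            assume nz: "fst h \<noteq> 0"
            have "cos (phi + eps * sin phi) = 0" using h1 lin1[of h] p11 p12 nz s0 kpos by auto
            moreover have "sin (phi + eps * sin phi) = 0" using h2 lin2'[of h] p21 p22 nz s0 kpos by auto
            ultimately show False using sin_cos_squared_add[of "phi + eps * sin phi"] by simp
          qed
          have s0': "snd h = 0"
          proof (cases "cos theta = 0")
            case True
            have "sin (2 * theta) = 0" by (simp add: sin_double True)
            moreover have "cos (2 * theta) = -1"
              using sin_cos_squared_add[of theta] True by (simp add: cos_double)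
            ultimately have "d5 (0,1) = - (K / D)"
              using Dpos' by (simp add: p52 D_def True)
            then have "d5 (0,1) \<noteq> 0" using Kpos Dpos' by simp
            then show ?thesis using h5 lin5[of h] f0 by simp
          next
            case False
            have num: "(c * (2 * cos theta * (- sin theta)) * cos (phi + nv) + 2 * sin theta * cos theta * cos (phi - nv)) * (c + q * (sin theta)^2)
              - (c * (cos theta)^2 * cos (phi + nv) + (sin theta)^2 * cos (phi - nv)) * (q * (2 * sin theta * cos theta))
              = 2 * sin theta * cos theta * c * (cos (phi - nv) - cos (phi + nv))"
              by (rule num_id[OF cq]) simp
            have BA: "cos (phi - nv) - cos (phi + nv) = 2 * sin phi * sin nv"
              by (simp add: cos_diff cos_add)
            have "d4 (0,1) = - (s * ((2 * sin theta * cos theta * c * (2 * sin phi * sin nv)) / (D * D)))"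
              using p42 num BA by (simp add: D_def)
            moreover have "2 * sin theta * cos theta * c * (2 * sin phi * sin nv) \<noteq> 0"
              using sth False cpos sph snv by simp
            ultimately have "d4 (0,1) \<noteq> 0" using s0 Dpos' by simp
            then show ?thesis using h4 lin4[of h] f0 by simp
          qed
          show "h = 0" using f0 s0' by (simp add: prod_eq_iff)
        qed
      qed
    qed
  qed
qed

end
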